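(* Let $K\ge 1$ and $M\ge 2$ be integers, and let $p>0$, $\beta_k>0$, $\alpha>0$, $p_{ce}>0$, $\delta_k>0$, $\sigma^2>0$ be real numbers and $\zeta_k\in(0,1]$. Let $h$ be a circularly-symmetric complex Gaussian random variable, $h\sim\mathcal{CN}(0,\beta_k)$ (so $|h|^2$ is exponentially distributed with mean $\beta_k$), and define $$\phi=\mathbb{E}\left\{\frac{1}{\frac{\beta_k |h|^2 \alpha p_{ce}\delta_k}{K\sigma^2}+1}\right\},\qquad P_{Ik}=p\,\beta_k\left[\zeta_k\left(M-(M-1)\phi-1\right)+1\right].$$ Define $$\mathcal{L}_1(\alpha,p_{ce})=1-\frac{K\sigma^2}{\beta_k^2\alpha p_{ce}\delta_k}\ln\!\left(1+\frac{\beta_k^2\alpha p_{ce}\delta_k}{K\sigma^2}\right),\qquad \mathcal{L}_2(\alpha,p_{ce})=1-\frac{K\sigma^2}{2\beta_k^2\alpha p_{ce}\delta_k}\ln\!\left(1+\frac{2\beta_k^2\alpha p_{ce}\delta_k}{K\sigma^2}\right).$$ Then $$P_{Ik}^{L}:=p\beta_k\left[\zeta_k(M-1)\mathcal{L}_1(\alpha,p_{ce})+1\right] \;<\; P_{Ik} \;<\; p\beta_k\left[\zeta_k(M-1)\mathcal{L}_2(\alpha,p_{ce})+1\right]=:P_{Ik}^{U}.$$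
   Context: Setting: a reader with $M$ transmit antennas powers $K$ single-antenna backscatter tags. $P_{Ik}$ is the incident signal power at tag $k$ when the reader transmits a signal of power $p$ with energy beamformer $\sum_{j}\sqrt{\zeta_j}\,\hat{\mathbf h}_{jr}^*/\|\hat{\mathbf h}_{jr}\|$ built from least-squares estimates of the backscatter channel; $\beta_k$ is the path loss to tag $k$, $\zeta_k$ the energy-allocation weight of tag $k$, $\alpha$ the channel-estimation duration (in symbol periods), $p_{ce}$ the per-antenna pilot power, $\delta_k$ the reflection coefficient of tag $k$, $\sigma^2$ the noise power, and $h$ models the unknown tag-to-reader (backward) channel coefficient. The closed form of $P_{Ik}$ displayed in the claim (expectation over the unknown backward channel) is taken as its definition. *)

theory Defs
  imports "HOL-Probability.Probability"
begin

definition phi_exp :: "real measure \<Rightarrow> (real \<Rightarrow> real) \<Rightarrow> nat \<Rightarrow> real \<Rightarrow> real \<Rightarrow> real \<Rightarrow> real \<Rightarrow> real \<Rightarrow> real" where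
  "phi_exp \<Omega> G K \<beta> \<alpha> pce \<delta> \<sigma>2 =
     prob_space.expectation \<Omega> (\<lambda>\<omega>. 1 / (\<beta> * G \<omega> * \<alpha> * pce * \<delta> / (real K * \<sigma>2) + 1))"

definition P_I :: "real \<Rightarrow> real \<Rightarrow> real \<Rightarrow> nat \<Rightarrow> real \<Rightarrow> real" where
  "P_I p \<beta> \<zeta> M \<phi> = p * \<beta> * (\<zeta> * (real M - (real M - 1) * \<phi> - 1) + 1)"

definition L1 :: "nat \<Rightarrow> real \<Rightarrow> real \<Rightarrow> real \<Rightarrow> real \<Rightarrow> real \<Rightarrow> real" where
  "L1 K \<beta> \<alpha> pce \<delta> \<sigma>2 = 1 - (real K * \<sigma>2) / (\<beta>^2 * \<alpha> * pce * \<delta>) *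
     ln (1 + (\<beta>^2 * \<alpha> * pce * \<delta>) / (real K * \<sigma>2))"

definition L2 :: "nat \<Rightarrow> real \<Rightarrow> real \<Rightarrow> real \<Rightarrow> real \<Rightarrow> real \<Rightarrow> real" where
  "L2 K \<beta> \<alpha> pce \<delta> \<sigma>2 = 1 - (real K * \<sigma>2) / (2 * \<beta>^2 * \<alpha> * pce * \<delta>) *
     ln (1 + (2 * \<beta>^2 * \<alpha> * pce * \<delta>) / (real K * \<sigma>2))"

end

theory Submission
  imports Defs
begin


lemma pos_lin: fixes a x :: real assumes "0 < a" "0 \<le> x" shows "0 < a*x+1"
  using mult_nonneg_nonneg[of a x] assms by linarith

lemma exp_int0: "has_bochner_integral lborel (\<lambda>x. exp (-x) * indicator {0..} x :: real) 1"
  using has_bochner_integral_I0i_power_exp_m'[of 0] by simp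

lemma exp_int1: "has_bochner_integral lborel (\<lambda>x. x * exp (-x) * indicator {0..} x :: real) 1"
  using has_bochner_integral_I0i_power_exp_m'[of 1] by simp

lemma Phi_int:
  fixes a :: real assumes "a > 0"
  shows "integrable lborel (\<lambda>x. exp (-x) / (a*x+1) * indicator {0..} x)"
proof (rule Bochner_Integration.integrable_bound[OF integrable.intros[OF exp_int0]])
  show "(\<lambda>x. exp (-x) / (a*x+1) * indicator {0..} x) \<in> borel_measurable lborel" by measurable
  show "AE x in lborel. norm (exp (-x) / (a*x+1) * indicator {0..} x :: real) \<le> norm (exp (-x) * indicator {0..} x :: real)"
  proof (rule AE_I2)
    fix x :: real
    show "norm (exp (-x) / (a*x+1) * indicator {0..} x :: real) \<le> norm (exp (-x) * indicator {0..} x :: real)"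
    proof (cases "x \<ge> 0")
      case True
      then have "1 \<le> a*x+1" using assms by simp
      then have "exp (-x) / (a*x+1) \<le> exp (-x)"
        using divide_left_mono[of 1 "a*x+1" "exp (-x)"] by simp
      then show ?thesis using True \<open>1 \<le> a*x+1\<close> by (simp add: abs_of_nonneg)
    qed (simp add: indicator_def)
  qed
qed

lemma fin_int:
  fixes f F :: "real \<Rightarrow> real"
  assumes "u \<le> v" "continuous_on {u..v} f"
    "\<And>x. u \<le> x \<Longrightarrow> x \<le> v \<Longrightarrow> (F has_real_derivative f x) (at x within {u..v})"
  shows "has_bochner_integral lborel (\<lambda>x. indicator {u..v} x * f x) (F v - F u)"
proof -
  have "integrable lborel (\<lambda>x. indicator {u..v} x *\<^sub>R f x)"
    using borel_integrable_atLeastAtMost'[OF assms(2)] by (simp add: set_integrable_def)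
  moreover have "integral\<^sup>L lborel (\<lambda>x. indicator {u..v} x *\<^sub>R f x) = F v - F u"
    by (rule integral_FTC_atLeastAtMost[OF assms(1) _ assms(2)])
       (simp add: assms(3) has_real_derivative_iff_has_vector_derivative[symmetric])
  ultimately show ?thesis by (simp add: has_bochner_integral_iff)
qed

lemma pos_int:
  fixes f :: "real \<Rightarrow> real"
  assumes "integrable lborel f" "\<And>x. 0 \<le> f x" "\<And>x. u < x \<Longrightarrow> x < v \<Longrightarrow> 0 < f x" "u < v"
  shows "integral\<^sup>L lborel f > 0"
proof -
  have "integral\<^sup>L lborel f \<ge> 0" using assms(2) by (simp add: integral_nonneg)
  moreover have "integral\<^sup>L lborel f \<noteq> 0"
  proof
    assume "integral\<^sup>L lborel f = 0"
    then have "AE x in lborel. f x = 0"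
      using integral_nonneg_eq_0_iff_AE[OF assms(1)] assms(2) by simp
    then have "AE x in lborel. x \<notin> {u<..<v}"
      by eventually_elim (use assms(3) in force)
    then have "emeasure lborel {u<..<v} = 0"
      by (subst (asm) AE_iff_measurable[of "{u<..<v}"]) auto
    then show False using assms(4) by simp
  qed
  ultimately show ?thesis by linarith
qed



lemma upper_bound:
  fixes a :: real assumes a: "a > 0"
  shows "integral\<^sup>L lborel (\<lambda>x. exp (-x) / (a*x+1) * indicator {0..} x) < ln (1+a) / a"
proof -
  define \<Phi> where "\<Phi> = integral\<^sup>L lborel (\<lambda>x. exp (-x) / (a*x+1) * indicator {0..} x)"
  define g1 where "g1 = 1 / (a+1)"
  define f where "f = (\<lambda>x. (exp (-x) * indicator {0..} x - indicator {0..1} x) * (g1 - 1/(a*x+1)) :: real)"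
  have F: "has_bochner_integral lborel (\<lambda>x. indicator {0..1} x * (g1 - 1/(a*x+1)))
     ((g1 * 1 - ln (1 + a*1)/a) - (g1 * 0 - ln (1 + a*0)/a))"
  proof (rule fin_int[where F="\<lambda>x. g1 * x - ln (1 + a*x)/a"])
    show "continuous_on {0..1} (\<lambda>x. g1 - 1 / (a * x + 1))"
      by (intro continuous_intros) (use pos_lin[OF a] in fastforce)
    fix x :: real assume "0 \<le> x" "x \<le> 1"
    then have "1 + a*x > 0" using a by (simp add: add_pos_nonneg)
    then show "((\<lambda>x. g1 * x - ln (1 + a * x) / a) has_real_derivative g1 - 1 / (a * x + 1)) (at x within {0..1})"
      using a apply - apply (rule derivative_eq_intros refl | simp)+ done
  qed simp
  have H: "has_bochner_integral lborel
     (\<lambda>x. g1 * (exp (-x) * indicator {0..} x) - exp (-x) / (a*x+1) * indicator {0..} x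
         - indicator {0..1} x * (g1 - 1/(a*x+1)))
     (g1 * 1 - \<Phi> - ((g1 * 1 - ln (1 + a*1)/a) - (g1 * 0 - ln (1 + a*0)/a)))"
    unfolding \<Phi>_def
    by (intro has_bochner_integral_diff has_bochner_integral_mult_right exp_int0 F
        has_bochner_integral_integrable Phi_int a)
  have H2: "has_bochner_integral lborel f (ln (1+a)/a - \<Phi>)"
    using H by (rule has_bochner_integral_cong[THEN iffD1, rotated -1]) (auto simp: f_def algebra_simps)
  have "integral\<^sup>L lborel f > 0"
  proof (rule pos_int[of f 1 2])
    show "integrable lborel f" using H2 by (simp add: has_bochner_integral_iff)
    fix x :: real
    show "0 \<le> f x"
    proof (cases "x < 0")
      case True then show ?thesis by (simp add: f_def)
    next
      case False
      show ?thesis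
      proof (cases "x \<le> 1")
        case True
        have "exp (-x) \<le> 1" using False by simp
        moreover have "g1 \<le> 1/(a*x+1)"
        proof -
          have "0 < a*x+1" using pos_lin[OF a] False by simp
          moreover have "a*x+1 \<le> a+1" using mult_left_le[of x a] a True by linarith
          ultimately show ?thesis unfolding g1_def by (intro frac_le) auto
        qed
        ultimately show ?thesis using False True
          by (simp add: f_def mult_nonpos_nonpos)
      next
        case T2: False
        have "g1 \<ge> 1/(a*x+1)"
        proof -
          have "a+1 \<le> a*x+1" using mult_left_mono[of 1 x a] a T2 by simp
          then show ?thesis unfolding g1_def using a by (intro frac_le) auto
        qed
        then show ?thesis using T2 by (simp add: f_def)
      qed
    qed
  next
    fix x :: real assume x: "1 < x" "x < 2"
    have "g1 > 1/(a*x+1)" unfolding g1_def using a x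
      by (intro frac_less2) (auto simp: add_pos_nonneg)
    then show "0 < f x" using x by (simp add: f_def)
  qed simp
  then show ?thesis using H2 unfolding \<Phi>_def by (simp add: has_bochner_integral_iff)
qed

lemma val2: fixes \<Phi> A B a :: real
  shows "\<Phi> - A * 1 - B * 1 - ((1/2 * (ln (1 + a*2)/a - A*2 - B*2^2/2)) - (1/2 * (ln (1 + a*0)/a - A*0 - B*0^2/2))) = \<Phi> - ln (1+2*a)/(2*a)"
  apply (simp add: mult.commute[of 2 a])
  apply (simp add: diff_divide_distrib)
  done

lemma ring2: fixes A B a x i e :: real
  shows "e / (a*x+1) * 1 - A * (e * 1)
         - B * (x * e * 1)
         - i * (1/2 * (1/(a*x+1) - A - B*x)) = (e * 1 - 1/2 * i) * (1/(a*x+1) - A - B*x)"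
  apply (simp only: mult_1_right)
  apply (simp only: divide_inverse)
  apply (simp only: algebra_simps)
  done

lemma sign_aux: fixes D q t :: real
  assumes "D > 0" "q > 0"
  shows "(0 \<le> q * t / D \<longleftrightarrow> 0 \<le> t)" "(0 < q * t / D \<longleftrightarrow> 0 < t)"
  using assms by (simp_all add: zero_le_divide_iff zero_less_divide_iff zero_le_mult_iff zero_less_mult_iff)

lemma aux: fixes d1 d2 d3 N C c x :: real
  assumes "d1 \<noteq> 0" "d2 \<noteq> 0" "d3 \<noteq> 0" "N = d2 * d3 - C * d1 + c * x * d1"
  shows "N / (d1 * d2 * d3) = 1 / d1 - C / (d2 * d3) - (- c / (d2 * d3)) * x"
  using assms by (simp add: field_simps)

lemma lower_bound:
  fixes a :: real assumes a: "a > 0"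
  shows "ln (1+2*a) / (2*a) < integral\<^sup>L lborel (\<lambda>x. exp (-x) / (a*x+1) * indicator {0..} x)"
proof -
  define \<Phi> where "\<Phi> = integral\<^sup>L lborel (\<lambda>x. exp (-x) / (a*x+1) * indicator {0..} x)"
  define p :: real where "p = ln 2"
  have p0: "0 < p" unfolding p_def by simp
  have p2: "p < 2" unfolding p_def using ln_le_minus_one[of 2] by simp
  have ep: "exp (-p) = 1/2" unfolding p_def by (simp add: exp_minus)
  define B where "B = - a / ((a*p+1)*(2*a+1))"
  define A where "A = (1 + a*p + 2*a) / ((a*p+1)*(2*a+1))"
  define R where "R = (\<lambda>x. a^2 * ((x-p)*(x-2)) / ((a*x+1)*(a*p+1)*(2*a+1)) :: real)"
  have pos1: "a*p+1 > 0" "2*a+1 > 0" using a p0 by (auto simp: add_pos_pos)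
  have Rid: "R x = 1/(a*x+1) - A - B*x" if "x \<ge> 0" for x
  proof -
    have "a*x+1 > 0" using pos_lin[OF a] that by simp
    then show ?thesis unfolding R_def A_def B_def
      by (intro aux) (use pos1 in \<open>auto simp: algebra_simps power2_eq_square\<close>)
  qed
  define f where "f = (\<lambda>x. (exp (-x) * indicator {0..} x - 1/2 * indicator {0..2} x) * R x :: real)"
  have F: "has_bochner_integral lborel (\<lambda>x. indicator {0..2} x * (1/2 * (1/(a*x+1) - A - B*x)))
     ((1/2 * (ln (1 + a*2)/a - A*2 - B*2^2/2)) - (1/2 * (ln (1 + a*0)/a - A*0 - B*0^2/2)))"
  proof (rule fin_int[where F="\<lambda>x. 1/2 * (ln (1 + a*x)/a - A*x - B*x^2/2)"])
    show "continuous_on {0..2} (\<lambda>x. 1/2 * (1/(a*x+1) - A - B*x))"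
      by (intro continuous_intros) (use pos_lin[OF a] in fastforce)
    fix x :: real assume "0 \<le> x" "x \<le> 2"
    then have "1 + a*x > 0" using a by (simp add: add_pos_nonneg)
    then show "((\<lambda>x. 1/2 * (ln (1 + a*x)/a - A*x - B*x^2/2)) has_real_derivative 1/2 * (1/(a*x+1) - A - B*x)) (at x within {0..2})"
      using a apply - apply (rule derivative_eq_intros refl | simp)+ done
  qed simp
  have H: "has_bochner_integral lborel
     (\<lambda>x. exp (-x) / (a*x+1) * indicator {0..} x - A * (exp (-x) * indicator {0..} x)
         - B * (x * exp (-x) * indicator {0..} x)
         - indicator {0..2} x * (1/2 * (1/(a*x+1) - A - B*x)))
     (\<Phi> - A * 1 - B * 1 - ((1/2 * (ln (1 + a*2)/a - A*2 - B*2^2/2)) - (1/2 * (ln (1 + a*0)/a - A*0 - B*0^2/2))))"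
    unfolding \<Phi>_def
    by (intro has_bochner_integral_diff has_bochner_integral_mult_right exp_int0 exp_int1 F
        has_bochner_integral_integrable Phi_int a)
  have H2: "has_bochner_integral lborel f (\<Phi> - ln (1+2*a)/(2*a))"
  proof (rule has_bochner_integral_cong[THEN iffD1, rotated -1, OF H])
    fix x :: real
    show "exp (-x) / (a*x+1) * indicator {0..} x - A * (exp (-x) * indicator {0..} x)
         - B * (x * exp (-x) * indicator {0..} x)
         - indicator {0..2} x * (1/2 * (1/(a*x+1) - A - B*x)) = f x"
    proof (cases "x \<ge> 0")
      case True
      have i0: "indicator {0..} x = (1::real)" using True by simp
      show ?thesis unfolding f_def Rid[OF True] i0 by (rule ring2)
    qed (simp add: f_def)
  qed (rule refl val2)+
  have Rsign: "0 \<le> R x \<longleftrightarrow> 0 \<le> (x-p)*(x-2)" "0 < R x \<longleftrightarrow> 0 < (x-p)*(x-2)" if "x \<ge> 0" for x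
  proof -
    have "a*x+1 > 0" using pos_lin[OF a] that by simp
    then have "(a*x+1)*(a*p+1)*(2*a+1) > 0" using pos1 by simp
    moreover have "a^2 > 0" using a by simp
    ultimately show "0 \<le> R x \<longleftrightarrow> 0 \<le> (x-p)*(x-2)" "0 < R x \<longleftrightarrow> 0 < (x-p)*(x-2)"
      unfolding R_def using sign_aux by blast+
  qed
  have "integral\<^sup>L lborel f > 0"
  proof (rule pos_int[of f 2 3])
    show "integrable lborel f" using H2 by (simp add: has_bochner_integral_iff)
    fix x :: real
    show "0 \<le> f x"
    proof (cases "x < 0")
      case True then show ?thesis by (simp add: f_def)
    next
      case False
      then have x0: "x \<ge> 0" by simp
      show ?thesis
      proof (cases "x < p")
        case True
        have "exp (-x) > exp (-p)" using True by simp
        then have "exp (-x) > 1/2" using ep by simp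
        moreover have "0 \<le> R x" using Rsign(1)[OF x0] True p2 by (simp add: mult_nonpos_nonpos)
        ultimately show ?thesis using x0 True p2 by (simp add: f_def)
      next
        case T2: False
        show ?thesis
        proof (cases "x \<le> 2")
          case True
          have "exp (-x) \<le> exp (-p)" using T2 by simp
          then have "exp (-x) \<le> 1/2" using ep by simp
          moreover have "R x \<le> 0"
          proof -
            have "\<not> 0 < (x-p)*(x-2)" using T2 True by (simp add: zero_less_mult_iff)
            then show ?thesis using Rsign(2)[OF x0] by linarith
          qed
          ultimately show ?thesis using x0 True by (simp add: f_def mult_nonpos_nonpos)
        next
          case False
          have "0 \<le> R x" using Rsign(1)[OF x0] False T2 by simp
          then show ?thesis using False by (simp add: f_def)
        qed
      qed
    qed
  next
    fix x :: real assume x: "2 < x" "x < 3"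
    have "0 < R x" using Rsign(2)[of x] x p2 by simp
    then show "0 < f x" using x by (simp add: f_def)
  qed simp
  then show ?thesis using H2 unfolding \<Phi>_def by (simp add: has_bochner_integral_iff)
qed


lemma phi_rewrite:
  fixes K :: nat and \<beta> \<alpha> pce \<delta> \<sigma>2 :: real and \<Omega> :: "real measure" and G :: "real \<Rightarrow> real"
  assumes "\<beta> > 0" and "distributed \<Omega> lborel G (exponential_density (1 / \<beta>))"
  shows "phi_exp \<Omega> G K \<beta> \<alpha> pce \<delta> \<sigma>2 =
    integral\<^sup>L lborel (\<lambda>x. exp (-x) / ((\<beta>^2*\<alpha>*pce*\<delta>/(real K*\<sigma>2))*x+1) * indicator {0..} x)"
proof -
  define h where "h = (\<lambda>x. 1 / (\<beta> * x * \<alpha> * pce * \<delta> / (real K * \<sigma>2) + 1))"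
  have "phi_exp \<Omega> G K \<beta> \<alpha> pce \<delta> \<sigma>2 = (\<integral>\<omega>. h (G \<omega>) \<partial>\<Omega>)"
    unfolding phi_exp_def h_def by simp
  also have "\<dots> = (\<integral>x. exponential_density (1/\<beta>) x * h x \<partial>lborel)"
    by (rule distributed_integral[symmetric, OF assms(2)])
       (auto simp: exponential_density_def h_def assms(1) less_imp_le)
  also have "\<dots> = \<bar>\<beta>\<bar> *\<^sub>R (\<integral>y. exponential_density (1/\<beta>) (0 + \<beta>*y) * h (0 + \<beta>*y) \<partial>lborel)"
    by (rule lborel_integral_real_affine) (use assms(1) in simp)
  also have "\<dots> = (\<integral>y. \<beta> * (exponential_density (1/\<beta>) (0 + \<beta>*y) * h (0 + \<beta>*y)) \<partial>lborel)"
    using assms(1) by simp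
  also have "\<dots> = integral\<^sup>L lborel (\<lambda>x. exp (-x) / ((\<beta>^2*\<alpha>*pce*\<delta>/(real K*\<sigma>2))*x+1) * indicator {0..} x)"
  proof (rule Bochner_Integration.integral_cong[OF refl])
    fix y :: real
    show "\<beta> * (exponential_density (1/\<beta>) (0 + \<beta>*y) * h (0 + \<beta>*y)) =
      exp (-y) / ((\<beta>^2*\<alpha>*pce*\<delta>/(real K*\<sigma>2))*y+1) * indicator {0..} y"
    proof (cases "y < 0")
      case True
      then have "\<beta>*y < 0" using assms(1) by (simp add: mult_pos_neg)
      then show ?thesis using True by (simp add: exponential_density_def)
    next
      case False
      then have "\<not> \<beta>*y < 0" using assms(1) by (simp add: not_less)
      moreover have "exp (- (\<beta> * y) * (1 / \<beta>)) = exp (-y)" using assms(1) by simp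
      moreover have "\<beta> * (\<beta> * y) * \<alpha> * pce * \<delta> / (real K * \<sigma>2) = (\<beta>^2*\<alpha>*pce*\<delta>/(real K*\<sigma>2))*y"
        by (simp add: power2_eq_square)
      ultimately show ?thesis using False assms(1) by (simp add: exponential_density_def h_def)
    qed
  qed
  finally show ?thesis .
qed

theorem proposition1:
  fixes K M :: nat and p \<beta> \<alpha> pce \<delta> \<sigma>2 \<zeta> :: real
    and \<Omega> :: "real measure" and G :: "real \<Rightarrow> real"
  assumes "K \<ge> 1" and "M \<ge> 2"
    and "p > 0" and "\<beta> > 0" and "\<alpha> > 0" and "pce > 0" and "\<delta> > 0" and "\<sigma>2 > 0"
    and "0 < \<zeta>" and "\<zeta> \<le> 1"
    and "prob_space \<Omega>"
    and "distributed \<Omega> lborel G (exponential_density (1 / \<beta>))"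
  shows "p * \<beta> * (\<zeta> * (real M - 1) * L1 K \<beta> \<alpha> pce \<delta> \<sigma>2 + 1)
           < P_I p \<beta> \<zeta> M (phi_exp \<Omega> G K \<beta> \<alpha> pce \<delta> \<sigma>2)
       \<and> P_I p \<beta> \<zeta> M (phi_exp \<Omega> G K \<beta> \<alpha> pce \<delta> \<sigma>2)
           < p * \<beta> * (\<zeta> * (real M - 1) * L2 K \<beta> \<alpha> pce \<delta> \<sigma>2 + 1)"
proof -
  define a where "a = \<beta>^2*\<alpha>*pce*\<delta>/(real K*\<sigma>2)"
  have Kp: "real K > 0" using assms(1) by simp
  have a: "a > 0" unfolding a_def using assms(4-8) Kp by (intro divide_pos_pos mult_pos_pos) auto
  define \<Phi> where "\<Phi> = integral\<^sup>L lborel (\<lambda>x. exp (-x) / (a*x+1) * indicator {0..} x)"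
  have phi: "phi_exp \<Omega> G K \<beta> \<alpha> pce \<delta> \<sigma>2 = \<Phi>"
    unfolding \<Phi>_def a_def by (rule phi_rewrite[OF assms(4) assms(12)])
  have up: "\<Phi> < ln (1+a)/a" unfolding \<Phi>_def by (rule upper_bound[OF a])
  have lo: "ln (1+2*a)/(2*a) < \<Phi>" unfolding \<Phi>_def by (rule lower_bound[OF a])
  have inv: "real K * \<sigma>2 / (\<beta>^2 * \<alpha> * pce * \<delta>) = 1/a" unfolding a_def by simp
  have inv2: "real K * \<sigma>2 / (2 * \<beta>^2 * \<alpha> * pce * \<delta>) = 1/(2*a)" unfolding a_def by simp
  have arg2: "2 * \<beta>^2 * \<alpha> * pce * \<delta> / (real K * \<sigma>2) = 2*a" unfolding a_def by simp
  have l1: "L1 K \<beta> \<alpha> pce \<delta> \<sigma>2 = 1 - ln (1+a)/a"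
    unfolding L1_def inv a_def[symmetric] by simp
  have l2: "L2 K \<beta> \<alpha> pce \<delta> \<sigma>2 = 1 - ln (1+2*a)/(2*a)"
    unfolding L2_def inv2 arg2 by simp
  define k where "k = p * \<beta> * \<zeta> * (real M - 1)"
  have M1: "real M - 1 > 0" using assms(2) by simp
  have k: "k > 0" unfolding k_def using assms(3,4,9) M1 by simp
  have e1: "p * \<beta> * (\<zeta> * (real M - 1) * L1 K \<beta> \<alpha> pce \<delta> \<sigma>2 + 1) = p*\<beta> + k * (1 - ln (1+a)/a)"
    unfolding l1 k_def by (simp only: algebra_simps)
  have e2: "p * \<beta> * (\<zeta> * (real M - 1) * L2 K \<beta> \<alpha> pce \<delta> \<sigma>2 + 1) = p*\<beta> + k * (1 - ln (1+2*a)/(2*a))"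
    unfolding l2 k_def by (simp only: algebra_simps)
  have e3: "P_I p \<beta> \<zeta> M (phi_exp \<Omega> G K \<beta> \<alpha> pce \<delta> \<sigma>2) = p*\<beta> + k * (1 - \<Phi>)"
    unfolding phi P_I_def k_def by (simp only: algebra_simps)
  have "k * (1 - ln (1+a)/a) < k * (1 - \<Phi>)" using k up by simp
  moreover have "k * (1 - \<Phi>) < k * (1 - ln (1+2*a)/(2*a))" using k lo by simp
  ultimately show ?thesis unfolding e1 e2 e3 by simp
qed

end
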